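(* Let $a,b$ be Laurent polynomials with symmetry types $\mathrm{S}a(z)=\epsilon_az^{c_a}$ and $\mathrm{S}b(z)=\epsilon_bz^{c_b}$ ($\epsilon_a,\epsilon_b\in\{\pm1\}$, $c_a,c_b\in\mathbb Z$), with $b\neq0$. (i) If $\epsilon_a\epsilon_b=1$, or $c_a-c_b$ is odd (i.e. in each of the cases $\epsilon_a\epsilon_b=1$, $c_a-c_b$ odd; $\epsilon_a\epsilon_b=-1$, $c_a-c_b$ odd; $\epsilon_a\epsilon_b=1$, $c_a-c_b$ even), then one can construct a Laurent polynomial $q$ with symmetry such that $r(z):=a(z)-b(z)q(z)$ satisfies $\mathrm{len}(r)<\mathrm{len}(b)$ and $\mathrm{S}r(z)=\mathrm{S}a(z)=\mathrm{S}b(z)\,\mathrm{S}q(z)$. (ii) If $\epsilon_a\epsilon_b=-1$ and $c_a-c_b$ is even, then one can construct a Laurent polynomial $q$ with symmetry such that $r(z):=a(z)-b(z)q(z)$ satisfies $\mathrm{len}(r)\le\mathrm{len}(b)$ and $\mathrm{S}r(z)=\mathrm{S}a(z)=\mathrm{S}b(z)\,\mathrm{S}q(z)$.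
   Context: Laurent polynomial $u(z)=\sum_ku(k)z^k$ with finitely many nonzero complex coefficients. $u$ has symmetry of type $\epsilon z^c$ if $u(z)=\epsilon z^cu(z^{-1})$; for nonzero $u$, $\mathrm{S}u(z):=u(z)/u(z^{-1})$; the zero polynomial has symmetry of every type. For nonzero $u$, $\mathrm{len}(u):=\max\{k:u(k)\ne0\}-\min\{k:u(k)\neq0\}$, and $\mathrm{len}(0):=-\infty$. *)

theory Defs
  imports Complex_Main "HOL-Library.Extended_Real"
begin

text \<open>A Laurent polynomial u(z) = sum_k u(k) z^k is represented by its coefficient
  function u :: int => complex, required to have finite support.\<close>

definition laurent :: "(int \<Rightarrow> complex) \<Rightarrow> bool" where
  "laurent u \<longleftrightarrow> finite {k. u k \<noteq> 0}"

definition lmult :: "(int \<Rightarrow> complex) \<Rightarrow> (int \<Rightarrow> complex) \<Rightarrow> (int \<Rightarrow> complex)" where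
  "lmult u v = (\<lambda>k. \<Sum>j\<in>{j. u j \<noteq> 0}. u j * v (k - j))"

text \<open>u has symmetry of type eps z^c: u(z) = eps z^c u(z^{-1}), i.e. coefficientwise
  u(k) = eps u(c-k). The zero polynomial has symmetry of every type.\<close>

definition has_sym_type :: "(int \<Rightarrow> complex) \<Rightarrow> complex \<Rightarrow> int \<Rightarrow> bool" where
  "has_sym_type u eps c \<longleftrightarrow> (\<forall>k. u k = eps * u (c - k))"

definition len :: "(int \<Rightarrow> complex) \<Rightarrow> ereal" where
  "len u = (if u = (\<lambda>_. 0) then -\<infinity>
            else ereal (of_int (Max {k. u k \<noteq> 0} - Min {k. u k \<noteq> 0})))"

end

theory Submission
  imports Defs
begin


definition mono1 :: "int \<Rightarrow> complex \<Rightarrow> int \<Rightarrow> complex" where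
  "mono1 m c = (\<lambda>k. if k = m then c else 0)"

lemma laurent_mono1: "laurent (mono1 m c)"
  unfolding laurent_def mono1_def by (rule finite_subset[of _ "{m}"]) auto

lemma laurent_zero: "laurent (\<lambda>_. 0)"
  unfolding laurent_def by simp

lemma laurent_add: "laurent u \<Longrightarrow> laurent v \<Longrightarrow> laurent (\<lambda>k. u k + v k)"
  unfolding laurent_def by (rule finite_subset[of _ "{k. u k \<noteq> 0} \<union> {k. v k \<noteq> 0}"]) auto

lemma laurent_diff: "laurent u \<Longrightarrow> laurent v \<Longrightarrow> laurent (u - v)"
  unfolding laurent_def by (rule finite_subset[of _ "{k. u k \<noteq> 0} \<union> {k. v k \<noteq> 0}"]) auto

lemma laurent_refl: "laurent u \<Longrightarrow> laurent (\<lambda>k. e * u (C - k))"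
  unfolding laurent_def
  by (rule finite_subset[of _ "(\<lambda>k. C - k) ` {k. u k \<noteq> 0}"]) (auto simp: image_iff intro!: exI[of _ "C - k" for k])

lemma laurent_shift: "laurent b \<Longrightarrow> laurent (\<lambda>k. c * b (k - m))"
  unfolding laurent_def
  by (rule finite_subset[of _ "(\<lambda>k. k + m) ` {k. b k \<noteq> 0}"]) (auto simp: image_iff intro!: exI[of _ "k - m" for k])

lemma lmult_zero: "lmult b (\<lambda>_. 0) = (\<lambda>_. 0)"
  unfolding lmult_def by simp

lemma lmult_add: "lmult b (\<lambda>k. u k + v k) = (\<lambda>k. lmult b u k + lmult b v k)"
  unfolding lmult_def by (auto simp: fun_eq_iff algebra_simps sum.distrib)

lemma lmult_avg: "lmult b (\<lambda>k. (u k + v k) / 2) = (\<lambda>k. (lmult b u k + lmult b v k) / 2)"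
  unfolding lmult_def by (auto simp: fun_eq_iff distrib_left add_divide_distrib sum.distrib sum_divide_distrib)

lemma lmult_mono1: "laurent b \<Longrightarrow> lmult b (mono1 m c) = (\<lambda>k. c * b (k - m))"
proof -
  assume lb: "laurent b"
  have "lmult b (mono1 m c) k = c * b (k - m)" for k
  proof -
    have "lmult b (mono1 m c) k = (\<Sum>j\<in>{j. b j \<noteq> 0}. if j = k - m then b j * c else 0)"
      unfolding lmult_def mono1_def by (rule sum.cong) auto
    also have "\<dots> = (if k - m \<in> {j. b j \<noteq> 0} then b (k - m) * c else 0)"
      using lb unfolding laurent_def by (simp add: sum.delta)
    also have "\<dots> = c * b (k - m)" by auto
    finally show ?thesis .
  qed
  then show ?thesis by auto
qed

lemma lmult_refl:
  assumes sb: "has_sym_type b eb cb" and eb: "eb \<in> {1, -1}"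
  shows "lmult b (\<lambda>k. e * q (C - k)) = (\<lambda>k. e * eb * lmult b q (C + cb - k))"
proof -
  have ebb: "eb * eb = 1" using eb by auto
  have bs: "b (cb - a) = eb * b a" for a
    using sb ebb unfolding has_sym_type_def by (metis mult.assoc mult_1 diff_diff_cancel)
  have "(\<Sum>j\<in>{j. b j \<noteq> 0}. b j * q (C + cb - k - j))
        = (\<Sum>j\<in>{j. b j \<noteq> 0}. eb * (b j * q (C - (k - j))))" for k
  proof (rule sum.reindex_bij_witness[where i="\<lambda>i. cb - i" and j="\<lambda>i. cb - i"])
    fix a assume "a \<in> {j. b j \<noteq> 0}"
    then show "cb - a \<in> {j. b j \<noteq> 0}" using bs eb by auto
  next
    fix a assume "a \<in> {j. b j \<noteq> 0}"
    then show "cb - a \<in> {j. b j \<noteq> 0}" using bs eb by auto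
  next
    fix a assume "a \<in> {j. b j \<noteq> 0}"
    show "eb * (b (cb - a) * q (C - (k - (cb - a)))) = b a * q (C + cb - k - a)"
      using bs[of a] ebb by (simp add: algebra_simps)
  qed auto
  then show ?thesis unfolding lmult_def
    by (auto simp: fun_eq_iff sum_distrib_left[symmetric] algebra_simps ebb)
qed




lemma top_red:
  assumes lb: "laurent b" and bmx: "b mx \<noteq> 0" and bnd: "\<forall>k. b k \<noteq> 0 \<longrightarrow> k \<le> mx"
  shows "laurent r \<Longrightarrow> \<forall>k. r k \<noteq> 0 \<longrightarrow> k \<le> t + int n \<Longrightarrow>
         \<exists>q. laurent q \<and> (\<forall>k. (r - lmult b q) k \<noteq> 0 \<longrightarrow> k \<le> t)"
proof (induction n arbitrary: r)
  case 0
  then show ?case by (intro exI[of _ "\<lambda>_. 0"]) (simp add: laurent_zero lmult_zero)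
next
  case (Suc n)
  define p where "p = t + int n + 1"
  define c where "c = r p / b mx"
  define r1 where "r1 = r - lmult b (mono1 (p - mx) c)"
  have r1e: "r1 = (\<lambda>k. r k - c * b (k - (p - mx)))"
    unfolding r1_def lmult_mono1[OF lb] by (simp add: fun_eq_iff)
  have lr1: "laurent r1" unfolding r1_def
    using laurent_diff[OF Suc.prems(1)] lmult_mono1[OF lb] laurent_shift[OF lb] by metis
  have "\<forall>k. r1 k \<noteq> 0 \<longrightarrow> k \<le> t + int n"
  proof (intro allI impI)
    fix k assume nz: "r1 k \<noteq> 0"
    show "k \<le> t + int n"
    proof (rule ccontr)
      assume "\<not> k \<le> t + int n"
      then consider "k = p" | "k > p" unfolding p_def by linarith
      then show False
      proof cases
        case 1 then show False using nz bmx unfolding r1e c_def by simp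
      next
        case 2
        then have "r k = 0" using Suc.prems(2) unfolding p_def by force
        moreover have "b (k - (p - mx)) = 0" using bnd 2 by force
        ultimately show False using nz unfolding r1e by simp
      qed
    qed
  qed
  then obtain q1 where q1: "laurent q1" "\<forall>k. (r1 - lmult b q1) k \<noteq> 0 \<longrightarrow> k \<le> t"
    using Suc.IH[OF lr1] by blast
  have "r - lmult b (\<lambda>k. mono1 (p - mx) c k + q1 k) = r1 - lmult b q1"
    unfolding r1_def lmult_add by (simp add: fun_eq_iff)
  then show ?case using q1 laurent_add[OF laurent_mono1 q1(1)]
    by (intro exI[of _ "\<lambda>k. mono1 (p - mx) c k + q1 k"]) auto
qed

lemma bot_red:
  assumes lb: "laurent b" and bmn: "b mn \<noteq> 0" and bnd: "\<forall>k. b k \<noteq> 0 \<longrightarrow> mn \<le> k \<and> k \<le> mx"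
    and hi: "s - 1 + (mx - mn) \<le> hi"
  shows "laurent r \<Longrightarrow> \<forall>k. r k \<noteq> 0 \<longrightarrow> s - int n \<le> k \<and> k \<le> hi \<Longrightarrow>
         \<exists>q. laurent q \<and> (\<forall>k. (r - lmult b q) k \<noteq> 0 \<longrightarrow> s \<le> k \<and> k \<le> hi)"
proof (induction n arbitrary: r)
  case 0
  then show ?case by (intro exI[of _ "\<lambda>_. 0"]) (simp add: laurent_zero lmult_zero)
next
  case (Suc n)
  define p where "p = s - int n - 1"
  define c where "c = r p / b mn"
  define r1 where "r1 = r - lmult b (mono1 (p - mn) c)"
  have r1e: "r1 = (\<lambda>k. r k - c * b (k - (p - mn)))"
    unfolding r1_def lmult_mono1[OF lb] by (simp add: fun_eq_iff)
  have lr1: "laurent r1" unfolding r1_def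
    using laurent_diff[OF Suc.prems(1)] lmult_mono1[OF lb] laurent_shift[OF lb] by metis
  have "\<forall>k. r1 k \<noteq> 0 \<longrightarrow> s - int n \<le> k \<and> k \<le> hi"
  proof (intro allI impI)
    fix k assume nz: "r1 k \<noteq> 0"
    have A: "b (k - (p - mn)) \<noteq> 0 \<Longrightarrow> p \<le> k \<and> k \<le> hi"
      using bnd hi unfolding p_def by force
    show "s - int n \<le> k \<and> k \<le> hi"
    proof (cases "r k = 0")
      case True
      then have "b (k - (p - mn)) \<noteq> 0" using nz unfolding r1e by auto
      then have "p \<le> k \<and> k \<le> hi" using A by blast
      moreover have "k \<noteq> p" using nz bmn unfolding r1e c_def by auto
      ultimately show ?thesis unfolding p_def by auto
    next
      case False
      then have "s - int (Suc n) \<le> k \<and> k \<le> hi" using Suc.prems(2) by blast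
      moreover have "k \<noteq> p" using nz bmn unfolding r1e c_def by auto
      ultimately show ?thesis unfolding p_def by auto
    qed
  qed
  then obtain q1 where q1: "laurent q1" "\<forall>k. (r1 - lmult b q1) k \<noteq> 0 \<longrightarrow> s \<le> k \<and> k \<le> hi"
    using Suc.IH[OF lr1] by blast
  have "r - lmult b (\<lambda>k. mono1 (p - mn) c k + q1 k) = r1 - lmult b q1"
    unfolding r1_def lmult_add by (simp add: fun_eq_iff)
  then show ?case using q1 laurent_add[OF laurent_mono1 q1(1)]
    by (intro exI[of _ "\<lambda>k. mono1 (p - mn) c k + q1 k"]) auto
qed



lemma laurent_lmult:
  assumes lb: "laurent b" and lq: "laurent q"
  shows "laurent (lmult b q)"
proof -
  have "{k. lmult b q k \<noteq> 0} \<subseteq> (\<lambda>(x, y). x + y) ` ({j. b j \<noteq> 0} \<times> {j. q j \<noteq> 0})"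
  proof
    fix k assume "k \<in> {k. lmult b q k \<noteq> 0}"
    then have "(\<Sum>j\<in>{j. b j \<noteq> 0}. b j * q (k - j)) \<noteq> 0" unfolding lmult_def by simp
    then obtain j where "j \<in> {j. b j \<noteq> 0}" "b j * q (k - j) \<noteq> 0"
      by (rule sum.not_neutral_contains_not_neutral)
    then have "b j \<noteq> 0" "q (k - j) \<noteq> 0" by auto
    then show "k \<in> (\<lambda>(x, y). x + y) ` ({j. b j \<noteq> 0} \<times> {j. q j \<noteq> 0})"
      by (intro image_eqI[of _ _ "(j, k - j)"]) auto
  qed
  moreover have "finite ((\<lambda>(x, y). x + y) ` ({j. b j \<noteq> 0} \<times> {j. q j \<noteq> 0}))"
    using lb lq unfolding laurent_def by (intro finite_imageI finite_cartesian_product)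
  ultimately show ?thesis unfolding laurent_def by (rule finite_subset)
qed



lemma div_red:
  assumes lb: "laurent b" and bmn: "b mn \<noteq> 0" and bmx: "b mx \<noteq> 0"
    and bnd: "\<forall>k. b k \<noteq> 0 \<longrightarrow> mn \<le> k \<and> k \<le> mx" and la: "laurent a"
  shows "\<exists>q. laurent q \<and> (\<forall>k. (a - lmult b q) k \<noteq> 0 \<longrightarrow> s \<le> k \<and> k \<le> s + (mx - mn) - 1)"
proof -
  define hi where "hi = s + (mx - mn) - 1"
  have bnd': "\<forall>k. b k \<noteq> 0 \<longrightarrow> k \<le> mx" using bnd by blast
  have fa: "finite {k. a k \<noteq> 0}" using la unfolding laurent_def .
  have abd: "\<forall>k. a k \<noteq> 0 \<longrightarrow> k \<le> hi + int (nat (Max {k. a k \<noteq> 0} - hi))"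
  proof (intro allI impI)
    fix k assume "a k \<noteq> 0"
    then have "k \<le> Max {k. a k \<noteq> 0}" using fa by (intro Max_ge) auto
    then show "k \<le> hi + int (nat (Max {k. a k \<noteq> 0} - hi))" by linarith
  qed
  obtain q1 where q1: "laurent q1" "\<forall>k. (a - lmult b q1) k \<noteq> 0 \<longrightarrow> k \<le> hi"
    using top_red[OF lb bmx bnd' la abd] by blast
  define r1 where "r1 = a - lmult b q1"
  have lr1: "laurent r1" unfolding r1_def
    by (rule laurent_diff[OF la laurent_lmult[OF lb q1(1)]])
  have fr: "finite {k. r1 k \<noteq> 0}" using lr1 unfolding laurent_def .
  have rbd: "\<forall>k. r1 k \<noteq> 0 \<longrightarrow> s - int (nat (s - Min {k. r1 k \<noteq> 0})) \<le> k \<and> k \<le> hi"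
  proof (intro allI impI)
    fix k assume nz: "r1 k \<noteq> 0"
    then have "Min {k. r1 k \<noteq> 0} \<le> k" using fr by (intro Min_le) auto
    moreover have "k \<le> hi" using nz q1(2) unfolding r1_def by blast
    ultimately show "s - int (nat (s - Min {k. r1 k \<noteq> 0})) \<le> k \<and> k \<le> hi" by linarith
  qed
  have hiok: "s - 1 + (mx - mn) \<le> hi" unfolding hi_def by simp
  obtain q2 where q2: "laurent q2" "\<forall>k. (r1 - lmult b q2) k \<noteq> 0 \<longrightarrow> s \<le> k \<and> k \<le> hi"
    using bot_red[OF lb bmn bnd hiok lr1 rbd] by blast
  have "a - lmult b (\<lambda>k. q1 k + q2 k) = r1 - lmult b q2"
    unfolding r1_def lmult_add by (simp add: fun_eq_iff)
  then show ?thesis using q2 laurent_add[OF q1(1) q2(1)] unfolding hi_def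
    by (intro exI[of _ "\<lambda>k. q1 k + q2 k"]) auto
qed



lemma avg_red:
  assumes lq: "laurent q" and sa: "has_sym_type a ea ca" and sb: "has_sym_type b eb cb"
    and ea: "ea \<in> {1, -1}" and eb: "eb \<in> {1, -1}"
    and w: "\<forall>k. (a - lmult b q) k \<noteq> 0 \<longrightarrow> lo \<le> k \<and> k \<le> hi" and c: "lo + hi = ca"
  shows "\<exists>q'. laurent q' \<and> has_sym_type q' (ea * eb) (ca - cb)
           \<and> (\<forall>k. (a - lmult b q') k \<noteq> 0 \<longrightarrow> lo \<le> k \<and> k \<le> hi)"
proof -
  have ebb: "eb * eb = 1" and eaa: "ea * ea = 1" using ea eb by auto
  define q' where "q' = (\<lambda>k. (q k + ea * eb * q (ca - cb - k)) / 2)"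
  have "lmult b q' = (\<lambda>k. (lmult b q k + ea * eb * eb * lmult b q (ca - cb + cb - k)) / 2)"
    unfolding q'_def lmult_avg lmult_refl[OF sb eb] ..
  then have lm: "lmult b q' k = (lmult b q k + ea * lmult b q (ca - k)) / 2" for k
    by (simp add: ebb mult.assoc)
  have ak: "a k = ea * a (ca - k)" for k using sa unfolding has_sym_type_def by blast
  have r': "(a - lmult b q') k = ((a - lmult b q) k + ea * (a - lmult b q) (ca - k)) / 2" for k
    using ak[of k] by (simp add: lm field_simps)
  have "laurent (\<lambda>k. q k + ea * eb * q (ca - cb - k))"
    using laurent_add[OF lq laurent_refl[OF lq]] .
  then have lq': "laurent q'" unfolding q'_def laurent_def
    by (rule finite_subset[rotated]) auto
  have sq': "has_sym_type q' (ea * eb) (ca - cb)"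
    unfolding has_sym_type_def q'_def
  proof
    fix k
    have "ea * eb * ((q (ca - cb - k) + ea * eb * q (ca - cb - (ca - cb - k))) / 2)
       = (ea * ea * (eb * eb) * q k + ea * eb * q (ca - cb - k)) / 2"
      by (simp add: field_simps)
    then show "(q k + ea * eb * q (ca - cb - k)) / 2 =
       ea * eb * ((q (ca - cb - k) + ea * eb * q (ca - cb - (ca - cb - k))) / 2)"
      by (simp add: eaa ebb)
  qed
  have "\<forall>k. (a - lmult b q') k \<noteq> 0 \<longrightarrow> lo \<le> k \<and> k \<le> hi"
  proof (intro allI impI)
    fix k assume "(a - lmult b q') k \<noteq> 0"
    then have "(a - lmult b q) k \<noteq> 0 \<or> (a - lmult b q) (ca - k) \<noteq> 0"
      unfolding r' by auto
    then show "lo \<le> k \<and> k \<le> hi"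
    proof
      assume "(a - lmult b q) (ca - k) \<noteq> 0"
      then have "lo \<le> ca - k \<and> ca - k \<le> hi" using w by blast
      then show ?thesis using c by linarith
    qed (use w in blast)
  qed
  then show ?thesis using lq' sq' by blast
qed



lemma symr:
  assumes sa: "has_sym_type a ea ca" and sb: "has_sym_type b eb cb"
    and ea: "ea \<in> {1, -1}" and eb: "eb \<in> {1, -1}"
    and sq: "has_sym_type q (ea * eb) (ca - cb)"
  shows "has_sym_type (a - lmult b q) ea ca"
proof -
  have ebb: "eb * eb = 1" using eb by auto
  have "q = (\<lambda>k. ea * eb * q (ca - cb - k))" using sq unfolding has_sym_type_def by blast
  then have "lmult b q = lmult b (\<lambda>k. ea * eb * q (ca - cb - k))" by simp
  also have "\<dots> = (\<lambda>k. ea * eb * eb * lmult b q (ca - cb + cb - k))"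
    by (rule lmult_refl[OF sb eb])
  finally have lm0: "lmult b q = (\<lambda>k. ea * eb * eb * lmult b q (ca - cb + cb - k))" .
  have lm: "lmult b q k = ea * lmult b q (ca - k)" for k
  proof -
    have "lmult b q k = ea * eb * eb * lmult b q (ca - cb + cb - k)" by (rule fun_cong[OF lm0])
    then show ?thesis by (simp add: ebb mult.assoc)
  qed
  show ?thesis unfolding has_sym_type_def
  proof
    fix k
    have "a k = ea * a (ca - k)" using sa unfolding has_sym_type_def by blast
    then show "(a - lmult b q) k = ea * (a - lmult b q) (ca - k)"
      using lm[of k] by (simp add: right_diff_distrib)
  qed
qed



lemma len_le:
  assumes "laurent r" and "\<forall>k. r k \<noteq> 0 \<longrightarrow> lo \<le> k \<and> k \<le> hi"
  shows "len r \<le> ereal (of_int (hi - lo))"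
proof (cases "r = (\<lambda>_. 0)")
  case True then show ?thesis by (simp add: len_def)
next
  case False
  then obtain k where k: "r k \<noteq> 0" by auto
  have f: "finite {k. r k \<noteq> 0}" using assms(1) unfolding laurent_def .
  have "Max {k. r k \<noteq> 0} \<in> {k. r k \<noteq> 0}" "Min {k. r k \<noteq> 0} \<in> {k. r k \<noteq> 0}"
    using Max_in[OF f] Min_in[OF f] k by blast+
  then have "Max {k. r k \<noteq> 0} \<le> hi" "lo \<le> Min {k. r k \<noteq> 0}" using assms(2) by auto
  then have "Max {k. r k \<noteq> 0} - Min {k. r k \<noteq> 0} \<le> hi - lo" by linarith
  then show ?thesis using False by (simp add: len_def)
qed




theorem lemma3p6:
  fixes a b :: "int \<Rightarrow> complex" and ea eb :: complex and ca cb :: int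
  assumes "laurent a" and "laurent b" and "b \<noteq> (\<lambda>_. 0)"
    and "ea \<in> {1, -1}" and "eb \<in> {1, -1}"
    and "has_sym_type a ea ca" and "has_sym_type b eb cb"
  shows "((ea * eb = 1 \<or> odd (ca - cb)) \<longrightarrow>
           (\<exists>q. laurent q \<and> has_sym_type q (ea * eb) (ca - cb)
                \<and> len (a - lmult b q) < len b
                \<and> has_sym_type (a - lmult b q) ea ca))
       \<and> ((ea * eb = -1 \<and> even (ca - cb)) \<longrightarrow>
           (\<exists>q. laurent q \<and> has_sym_type q (ea * eb) (ca - cb)
                \<and> len (a - lmult b q) \<le> len b
                \<and> has_sym_type (a - lmult b q) ea ca))"
proof -
  note la = assms(1) and lb = assms(2) and ea = assms(4) and eb = assms(5)
    and sa = assms(6) and sb = assms(7)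
  define S where "S = {k. b k \<noteq> 0}"
  have fS: "finite S" using lb unfolding laurent_def S_def .
  obtain k0 where "b k0 \<noteq> 0" using assms(3) by auto
  then have neS: "S \<noteq> {}" unfolding S_def by auto
  define mn where "mn = Min S"
  define mx where "mx = Max S"
  have bmn: "b mn \<noteq> 0" using Min_in[OF fS neS] unfolding mn_def S_def by auto
  have bmx: "b mx \<noteq> 0" using Max_in[OF fS neS] unfolding mx_def S_def by auto
  have bnd: "\<forall>k. b k \<noteq> 0 \<longrightarrow> mn \<le> k \<and> k \<le> mx"
    using Min_le[OF fS] Max_ge[OF fS] unfolding mn_def mx_def S_def by auto
  have bsym: "b k = eb * b (cb - k)" for k using sb unfolding has_sym_type_def by blast
  have "b (cb - mn) \<noteq> 0" using bmn bsym[of mn] by auto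
  then have "cb - mn \<le> mx" using bnd by blast
  moreover have "b (cb - mx) \<noteq> 0" using bmx bsym[of mx] by auto
  then have "mn \<le> cb - mx" using bnd by blast
  ultimately have cbe: "mn + mx = cb" by linarith
  have lenb: "len b = ereal (of_int (mx - mn))"
    using assms(3) unfolding len_def mn_def mx_def S_def by simp
  define L where "L = mx - mn"
  show ?thesis
  proof (cases "odd (ca - cb)")
    case True
    then obtain m where m: "ca - cb = 2 * m + 1" by (metis oddE)
    define s where "s = m + mn + 1"
    obtain q where q: "laurent q" "\<forall>k. (a - lmult b q) k \<noteq> 0 \<longrightarrow> s \<le> k \<and> k \<le> s + (mx - mn) - 1"
      using div_red[OF lb bmn bmx bnd la, of s] by blast
    have "s + (s + (mx - mn) - 1) = ca" unfolding s_def using m cbe by linarith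
    then obtain q' where q': "laurent q'" "has_sym_type q' (ea * eb) (ca - cb)"
      "\<forall>k. (a - lmult b q') k \<noteq> 0 \<longrightarrow> s \<le> k \<and> k \<le> s + (mx - mn) - 1"
      using avg_red[OF q(1) sa sb ea eb q(2)] by blast
    have "len (a - lmult b q') \<le> ereal (of_int (s + (mx - mn) - 1 - s))"
      by (rule len_le[OF laurent_diff[OF la laurent_lmult[OF lb q'(1)]] q'(3)])
    also have "\<dots> < len b" unfolding lenb by simp
    finally have "len (a - lmult b q') < len b" .
    moreover have "has_sym_type (a - lmult b q') ea ca" by (rule symr[OF sa sb ea eb q'(2)])
    ultimately show ?thesis using q' True by blast
  next
    case False
    then obtain m where m: "ca - cb = 2 * m" by (metis evenE)
    define s where "s = m + mn"
    obtain q where q: "laurent q" "\<forall>k. (a - lmult b q) k \<noteq> 0 \<longrightarrow> s \<le> k \<and> k \<le> s + (mx - mn) - 1"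
      using div_red[OF lb bmn bmx bnd la, of s] by blast
    then have q2: "\<forall>k. (a - lmult b q) k \<noteq> 0 \<longrightarrow> s \<le> k \<and> k \<le> s + (mx - mn)"
      by force
    have "s + (s + (mx - mn)) = ca" unfolding s_def using m cbe by linarith
    then obtain q' where q': "laurent q'" "has_sym_type q' (ea * eb) (ca - cb)"
      "\<forall>k. (a - lmult b q') k \<noteq> 0 \<longrightarrow> s \<le> k \<and> k \<le> s + (mx - mn)"
      using avg_red[OF q(1) sa sb ea eb q2] by blast
    have lr': "laurent (a - lmult b q')" by (rule laurent_diff[OF la laurent_lmult[OF lb q'(1)]])
    have sr': "has_sym_type (a - lmult b q') ea ca" by (rule symr[OF sa sb ea eb q'(2)])
    show ?thesis
    proof (cases "ea * eb = -1")
      case True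
      have "len (a - lmult b q') \<le> ereal (of_int (s + (mx - mn) - s))"
        by (rule len_le[OF lr' q'(3)])
      also have "\<dots> = len b" unfolding lenb by simp
      finally have "len (a - lmult b q') \<le> len b" .
      then show ?thesis using q' sr' True False by auto
    next
      case ne: False
      then have e1: "ea * eb = 1" using ea eb by auto
      define r' where "r' = a - lmult b q'"
      define c where "c = r' s / b mn"
      define q'' where "q'' = (\<lambda>k. q' k + mono1 m c k)"
      have lq'': "laurent q''" unfolding q''_def by (rule laurent_add[OF q'(1) laurent_mono1])
      have sq'': "has_sym_type q'' (ea * eb) (ca - cb)"
        unfolding has_sym_type_def q''_def e1
      proof
        fix k
        have "q' k = q' (ca - cb - k)" using q'(2) unfolding has_sym_type_def e1 by simp
        moreover have "mono1 m c k = mono1 m c (ca - cb - k)" unfolding mono1_def m by auto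
        ultimately show "q' k + mono1 m c k = 1 * (q' (ca - cb - k) + mono1 m c (ca - cb - k))"
          by simp
      qed
      have r''e: "(a - lmult b q'') k = r' k - c * b (k - m)" for k
      proof -
        have "lmult b q'' = (\<lambda>k. lmult b q' k + lmult b (mono1 m c) k)"
          unfolding q''_def by (rule lmult_add)
        then show ?thesis unfolding r'_def lmult_mono1[OF lb] by simp
      qed
      have sr'': "has_sym_type (a - lmult b q'') ea ca" by (rule symr[OF sa sb ea eb sq''])
      have z1: "(a - lmult b q'') s = 0" unfolding r''e c_def s_def using bmn by simp
      have "(a - lmult b q'') (s + (mx - mn)) = ea * (a - lmult b q'') (ca - (s + (mx - mn)))"
        using sr'' unfolding has_sym_type_def by blast
      also have "ca - (s + (mx - mn)) = s" unfolding s_def using m cbe by linarith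
      finally have z2: "(a - lmult b q'') (s + (mx - mn)) = 0" using z1 by simp
      have w: "\<forall>k. (a - lmult b q'') k \<noteq> 0 \<longrightarrow> s + 1 \<le> k \<and> k \<le> s + (mx - mn) - 1"
      proof (intro allI impI)
        fix k assume nz: "(a - lmult b q'') k \<noteq> 0"
        then have "r' k \<noteq> 0 \<or> b (k - m) \<noteq> 0" unfolding r''e by auto
        then have "s \<le> k \<and> k \<le> s + (mx - mn)"
        proof
          assume "r' k \<noteq> 0" then show ?thesis using q'(3) unfolding r'_def by blast
        next
          assume "b (k - m) \<noteq> 0"
          then have "mn \<le> k - m \<and> k - m \<le> mx" using bnd by blast
          then show ?thesis unfolding s_def by linarith
        qed
        moreover have "k \<noteq> s" using nz z1 by auto
        moreover have "k \<noteq> s + (mx - mn)" using nz z2 by auto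
        ultimately show "s + 1 \<le> k \<and> k \<le> s + (mx - mn) - 1" by linarith
      qed
      have lr'': "laurent (a - lmult b q'')" by (rule laurent_diff[OF la laurent_lmult[OF lb lq'']])
      have "len (a - lmult b q'') \<le> ereal (of_int (s + (mx - mn) - 1 - (s + 1)))"
        by (rule len_le[OF lr'' w])
      also have "\<dots> < len b" unfolding lenb by simp
      finally have "len (a - lmult b q'') < len b" .
      then show ?thesis using lq'' sq'' sr'' e1 ne by auto
    qed
  qed
qed


end
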